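(* Fix a constant $\Delta$. There is no LCL problem on general graphs of maximum degree at most $\Delta$ with mending radius between $\omega(1)$ and $o(\log n)$: if such an LCL problem $\Pi$ is $T$-mendable for some function $T$ with $T(n)=o(\log n)$, then $\Pi$ is $T'$-mendable for some constant function $T'$.
   Context: A locally verifiable problem $\Pi$ on a graph family $\mathcal{G}$ is given by a set $\Sigma$ of input labels, a set $\Gamma$ of output labels and a verifier $\psi$ with verification radius $r$: $\psi(G,\lambda,v)\in\{\text{happy},\text{unhappy}\}$ depends only on the radius-$r$ neighborhood of $v$ (structure, inputs and outputs, up to isomorphism); $\lambda:V\to\Gamma$ is a solution if $\psi$ is happy everywhere. $\Pi$ is an LCL problem if $\Sigma,\Gamma$ are finite and all graphs in $\mathcal{G}$ have maximum degree bounded by a constant. Partial labelings are maps $\lambda:V\to\Gamma\cup\{\bot\}$; the relaxed verifier $\psi^*$ is happy at $v$ if some node within distance $r$ of $v$ has label $\bot$, and otherwise $\psi^*(G,\lambda,v)=\psi(G,\lambda',v)$ for any $\lambda':V\to\Gamma$ agreeing with $\lambda$ on the radius-$r$ neighborhood of $v$; $\psi^*$ accepts $\lambda$ if happy everywhere. Given $\lambda$ accepted by $\psi^*$ and node $v$, a $t$-mend of $\lambda$ at $v$ is a partial labeling $\mu$ accepted by $\psi^*$ with $\mu(v)\neq\bot$, $\mu(u)=\bot\Rightarrow\lambda(u)=\bot$, and $\mu(u)\neq\lambda(u)\Rightarrow\mathrm{dist}(u,v)\le t$. A verifier is $T$-mendable if for every $G\in\mathcal{G}$ with $n$ nodes,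 every $\lambda$ accepted by $\psi^*$ and every node $v$, a $T(n)$-mend at $v$ exists; $\Pi$ is $T$-mendable if some radius-$r$ verifier for $\Pi$ (accepting exactly the solutions of $\Pi$) is $T$-mendable. *)

theory Defs
  imports Complex_Main "HOL-Library.Landau_Symbols"
begin

type_synonym graph = "nat set \<times> (nat \<times> nat) set"

definition wf_graph :: "graph \<Rightarrow> bool" where
  "wf_graph G \<longleftrightarrow> finite (fst G) \<and> snd G \<subseteq> fst G \<times> fst G
     \<and> (\<forall>x y. (x, y) \<in> snd G \<longrightarrow> (y, x) \<in> snd G)
     \<and> (\<forall>x. (x, x) \<notin> snd G)"

definition max_deg_le :: "nat \<Rightarrow> graph \<Rightarrow> bool" where
  "max_deg_le \<Delta> G \<longleftrightarrow> (\<forall>v\<in>fst G. card {u. (v, u) \<in> snd G} \<le> \<Delta>)"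

definition bounded_graph :: "nat \<Rightarrow> graph \<Rightarrow> bool" where
  "bounded_graph \<Delta> G \<longleftrightarrow> wf_graph G \<and> max_deg_le \<Delta> G"

fun dist_le :: "graph \<Rightarrow> nat \<Rightarrow> nat \<Rightarrow> nat \<Rightarrow> bool" where
  "dist_le G 0 v u = (u = v \<and> v \<in> fst G)"
| "dist_le G (Suc k) v u = (dist_le G k v u \<or> (\<exists>w. dist_le G k v w \<and> (w, u) \<in> snd G))"

definition ball :: "graph \<Rightarrow> nat \<Rightarrow> nat \<Rightarrow> nat set" where
  "ball G k v = {u \<in> fst G. dist_le G k v u}"

definition local_iso ::
  "nat \<Rightarrow> graph \<Rightarrow> (nat \<Rightarrow> 'i) \<Rightarrow> (nat \<Rightarrow> 'o) \<Rightarrow> nat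
   \<Rightarrow> graph \<Rightarrow> (nat \<Rightarrow> 'i) \<Rightarrow> (nat \<Rightarrow> 'o) \<Rightarrow> nat \<Rightarrow> (nat \<Rightarrow> nat) \<Rightarrow> bool" where
  "local_iso r G inp lab v G' inp' lab' v' f \<longleftrightarrow>
     bij_betw f (ball G r v) (ball G' r v') \<and> f v = v'
     \<and> (\<forall>x\<in>ball G r v. \<forall>y\<in>ball G r v. ((x, y) \<in> snd G \<longleftrightarrow> (f x, f y) \<in> snd G'))
     \<and> (\<forall>x\<in>ball G r v. inp' (f x) = inp x \<and> lab' (f x) = lab x)"

text \<open>A verifier: given graph, input labelling, output labelling, node; True = happy.\<close>
type_synonym ('i, 'o) verifier = "graph \<Rightarrow> (nat \<Rightarrow> 'i) \<Rightarrow> (nat \<Rightarrow> 'o) \<Rightarrow> nat \<Rightarrow> bool"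

definition is_verifier :: "nat \<Rightarrow> nat \<Rightarrow> ('i, 'o) verifier \<Rightarrow> bool" where
  "is_verifier \<Delta> r \<psi> \<longleftrightarrow>
     (\<forall>G G' inp inp' lab lab' v v' f.
        bounded_graph \<Delta> G \<and> bounded_graph \<Delta> G' \<and> v \<in> fst G \<and> v' \<in> fst G'
        \<and> local_iso r G inp lab v G' inp' lab' v' f
        \<longrightarrow> \<psi> G inp lab v = \<psi> G' inp' lab' v')"

definition is_LCL :: "nat \<Rightarrow> nat \<Rightarrow> ('i, 'o) verifier \<Rightarrow> bool" where
  "is_LCL \<Delta> r \<psi> \<longleftrightarrow> finite (UNIV :: 'i set) \<and> finite (UNIV :: 'o set) \<and> is_verifier \<Delta> r \<psi>"

definition solution :: "('i, 'o) verifier \<Rightarrow> graph \<Rightarrow> (nat \<Rightarrow> 'i) \<Rightarrow> (nat \<Rightarrow> 'o) \<Rightarrow> bool" where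
  "solution \<psi> G inp lab \<longleftrightarrow> (\<forall>v\<in>fst G. \<psi> G inp lab v)"

text \<open>Relaxed verifier psi* on partial labellings (None = bottom).\<close>
definition relaxed :: "nat \<Rightarrow> ('i, 'o) verifier \<Rightarrow> graph \<Rightarrow> (nat \<Rightarrow> 'i) \<Rightarrow> (nat \<Rightarrow> 'o option) \<Rightarrow> nat \<Rightarrow> bool" where
  "relaxed r \<psi> G inp \<mu> v \<longleftrightarrow>
     (\<exists>u\<in>ball G r v. \<mu> u = None)
     \<or> (\<forall>lab. (\<forall>u\<in>ball G r v. \<mu> u = Some (lab u)) \<longrightarrow> \<psi> G inp lab v)"

definition accepts_relaxed :: "nat \<Rightarrow> ('i, 'o) verifier \<Rightarrow> graph \<Rightarrow> (nat \<Rightarrow> 'i) \<Rightarrow> (nat \<Rightarrow> 'o option) \<Rightarrow> bool" where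
  "accepts_relaxed r \<psi> G inp \<mu> \<longleftrightarrow> (\<forall>v\<in>fst G. relaxed r \<psi> G inp \<mu> v)"

definition is_mend :: "nat \<Rightarrow> ('i, 'o) verifier \<Rightarrow> graph \<Rightarrow> (nat \<Rightarrow> 'i)
    \<Rightarrow> (nat \<Rightarrow> 'o option) \<Rightarrow> (nat \<Rightarrow> 'o option) \<Rightarrow> nat \<Rightarrow> nat \<Rightarrow> bool" where
  "is_mend r \<psi> G inp lam \<mu> v t \<longleftrightarrow>
     accepts_relaxed r \<psi> G inp \<mu> \<and> \<mu> v \<noteq> None
     \<and> (\<forall>u\<in>fst G. \<mu> u = None \<longrightarrow> lam u = None)
     \<and> (\<forall>u\<in>fst G. \<mu> u \<noteq> lam u \<longrightarrow> dist_le G t v u)"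

definition verifier_mendable :: "nat \<Rightarrow> nat \<Rightarrow> ('i, 'o) verifier \<Rightarrow> (nat \<Rightarrow> nat) \<Rightarrow> bool" where
  "verifier_mendable \<Delta> r \<psi> T \<longleftrightarrow>
     (\<forall>G inp lam v. bounded_graph \<Delta> G \<and> accepts_relaxed r \<psi> G inp lam \<and> v \<in> fst G
        \<longrightarrow> (\<exists>\<mu>. is_mend r \<psi> G inp lam \<mu> v (T (card (fst G)))))"

definition problem_mendable :: "nat \<Rightarrow> nat \<Rightarrow> ('i, 'o) verifier \<Rightarrow> (nat \<Rightarrow> nat) \<Rightarrow> bool" where
  "problem_mendable \<Delta> r \<psi> T \<longleftrightarrow>
     (\<exists>\<psi>'. is_verifier \<Delta> r \<psi>'
        \<and> (\<forall>G inp lab. bounded_graph \<Delta> G \<longrightarrow> (solution \<psi>' G inp lab \<longleftrightarrow> solution \<psi> G inp lab))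
        \<and> verifier_mendable \<Delta> r \<psi>' T)"

end

theory Submission
  imports Defs
begin

lemma exists_n0:
  fixes T :: "nat \<Rightarrow> nat" and a K :: nat
  assumes "(\<lambda>n. real (T n)) \<in> o(\<lambda>n. ln (real n))" and a: "a \<ge> 2"
  shows "\<exists>n. a ^ T n * K \<le> n"
proof -
  have la: "ln (real a) > 0" using a by simp
  define \<epsilon> where "\<epsilon> = 1 / (2 * ln (real a))"
  have ep: "\<epsilon> > 0" using la by (simp add: \<epsilon>_def)
  have "eventually (\<lambda>n. norm (real (T n)) \<le> \<epsilon> * norm (ln (real n))) at_top"
    using landau_o.smallD[OF assms(1) ep] .
  moreover have "eventually (\<lambda>n. n \<ge> max 1 (K^2)) at_top" by (rule eventually_ge_at_top)
  ultimately have "eventually (\<lambda>n. real (T n) \<le> \<epsilon> * \<bar>ln (real n)\<bar> \<and> n \<ge> max 1 (K^2)) at_top"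
    by eventually_elim auto
  then obtain n where n1: "real (T n) \<le> \<epsilon> * \<bar>ln (real n)\<bar>" and n2: "n \<ge> max 1 (K^2)"
    by (auto simp: eventually_at_top_linorder)
  have npos: "real n > 0" using n2 by simp
  have "ln (real n) \<ge> 0" using n2 by simp
  with n1 have "real (T n) \<le> \<epsilon> * ln (real n)" by simp
  hence "real (2 * T n) * ln (real a) \<le> ln (real n)" using la
    by (simp add: \<epsilon>_def field_simps)
  hence "exp (real (2 * T n) * ln (real a)) \<le> exp (ln (real n))" by simp
  hence "exp (ln (real a)) ^ (2 * T n) \<le> real n" using npos by (simp only: exp_of_nat_mult exp_ln)
  hence "real a ^ (2 * T n) \<le> real n" using a by simp
  hence h1: "(a ^ T n)^2 \<le> n" by (metis of_nat_le_iff of_nat_power power_mult mult.commute)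
  have h2: "K^2 \<le> n" using n2 by simp
  have "(a ^ T n * K)^2 \<le> n * n" using mult_le_mono[OF h1 h2] by (simp add: power_mult_distrib)
  hence "a ^ T n * K \<le> n"
    by (metis power2_eq_square power2_le_imp_le zero_le)
  thus ?thesis by blast
qed

lemma dist_in: "dist_le G k v u \<Longrightarrow> wf_graph G \<Longrightarrow> v \<in> fst G \<and> u \<in> fst G"
  by (induction k arbitrary: u) (auto simp: wf_graph_def)

lemma dist_mono_add: "dist_le G a v u \<Longrightarrow> dist_le G (a + k) v u"
  by (induction k) auto

lemma dist_mono: "dist_le G a v u \<Longrightarrow> a \<le> b \<Longrightarrow> dist_le G b v u"
  using dist_mono_add[of G a v u "b - a"] by simp

lemma dist_trans: "dist_le G a v w \<Longrightarrow> dist_le G b w u \<Longrightarrow> dist_le G (a + b) v u"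
  by (induction b arbitrary: u) auto

lemma dist_refl: "v \<in> fst G \<Longrightarrow> dist_le G k v v"
  using dist_mono[of G 0 v v k] by simp

lemma dist_edge: "wf_graph G \<Longrightarrow> (x, u) \<in> snd G \<Longrightarrow> dist_le G 1 x u"
  by (auto simp: wf_graph_def)

lemma dist_sym: "wf_graph G \<Longrightarrow> dist_le G k w u \<Longrightarrow> dist_le G k u w"
proof (induction k arbitrary: u)
  case 0 then show ?case by simp
next
  case (Suc k)
  show ?case
  proof (cases "dist_le G k w u")
    case True then show ?thesis using Suc by simp
  next
    case False
    then obtain x where x: "dist_le G k w x" "(x, u) \<in> snd G" using Suc.prems by auto
    have "(u, x) \<in> snd G" using x(2) Suc.prems(1) by (auto simp: wf_graph_def)
    hence "dist_le G 1 u x" using dist_edge Suc.prems(1) by blast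
    moreover have "dist_le G k x w" using Suc.IH[OF Suc.prems(1) x(1)] .
    ultimately show ?thesis using dist_trans[of G 1 u x k w] by simp
  qed
qed

lemma dist_sub: "snd H \<subseteq> snd G \<Longrightarrow> w \<in> fst G \<Longrightarrow> dist_le H k w u \<Longrightarrow> dist_le G k w u"
  by (induction k arbitrary: u) auto

lemma dist_sup:
  assumes "wf_graph G" "snd H = snd G \<inter> (B \<times> B)" "ball G R v \<subseteq> B" "B \<subseteq> fst H"
    "dist_le G d v w"
  shows "dist_le G k w u \<Longrightarrow> d + k \<le> R \<Longrightarrow> dist_le H k w u"
proof (induction k arbitrary: u)
  case 0
  have "dist_le G R v w" using dist_mono assms(5) 0 by simp
  hence "w \<in> B" using assms dist_in unfolding ball_def by blast
  thus ?case using 0 assms by auto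
next
  case (Suc k)
  show ?case
  proof (cases "dist_le G k w u")
    case True then show ?thesis using Suc by simp
  next
    case False
    then obtain x where x: "dist_le G k w x" "(x, u) \<in> snd G" using Suc.prems by auto
    have "dist_le G (d + k) v x" using dist_trans[OF assms(5) x(1)] .
    hence "dist_le G R v x" by (rule dist_mono) (use Suc.prems in simp)
    hence xB: "x \<in> B" using assms dist_in unfolding ball_def by blast
    have "dist_le G (Suc (d + k)) v u" using \<open>dist_le G (d + k) v x\<close> x(2) by auto
    hence "dist_le G R v u" by (rule dist_mono) (use Suc.prems in simp)
    hence "u \<in> B" using assms dist_in unfolding ball_def by blast
    with xB x(2) assms(2) have "(x, u) \<in> snd H" by auto
    moreover have "dist_le H k w x" using Suc.IH x(1) Suc.prems(2) by simp
    ultimately show ?thesis by auto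
  qed
qed

lemma relaxed_transfer:
  assumes ver: "is_verifier \<Delta> r \<psi>" and b1: "bounded_graph \<Delta> G1" and b2: "bounded_graph \<Delta> G2"
    and w1: "w \<in> fst G1" and w2: "w \<in> fst G2"
    and bl: "ball G1 r w = ball G2 r w"
    and ed: "\<forall>x\<in>ball G1 r w. \<forall>y\<in>ball G1 r w. ((x, y) \<in> snd G1 \<longleftrightarrow> (x, y) \<in> snd G2)"
    and mu: "\<forall>u\<in>ball G1 r w. \<mu>1 u = \<mu>2 u"
    and rel: "relaxed r \<psi> G1 inp \<mu>1 w"
  shows "relaxed r \<psi> G2 inp \<mu>2 w"
proof (cases "\<exists>u\<in>ball G1 r w. \<mu>1 u = None")
  case True
  then show ?thesis using mu bl unfolding relaxed_def by auto
next
  case False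
  hence all: "\<forall>lab. (\<forall>u\<in>ball G1 r w. \<mu>1 u = Some (lab u)) \<longrightarrow> \<psi> G1 inp lab w"
    using rel unfolding relaxed_def by auto
  have "\<psi> G2 inp lab w" if "\<forall>u\<in>ball G2 r w. \<mu>2 u = Some (lab u)" for lab
  proof -
    have "\<psi> G1 inp lab w" using all that mu bl by auto
    moreover have "local_iso r G1 inp lab w G2 inp lab w id"
      unfolding local_iso_def using bl ed by (auto simp: bij_betw_def)
    ultimately show ?thesis using ver b1 b2 w1 w2 unfolding is_verifier_def by blast
  qed
  thus ?thesis unfolding relaxed_def by auto
qed

lemma ball_card:
  assumes "bounded_graph \<Delta> G"
  shows "card (ball G k v) \<le> (\<Delta> + 1) ^ k"
proof (induction k)
  case 0
  have "ball G 0 v \<subseteq> {v}" by (auto simp: ball_def)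
  hence "card (ball G 0 v) \<le> card {v}" by (intro card_mono) auto
  thus ?case by simp
next
  case (Suc k)
  have wf: "wf_graph G" and md: "max_deg_le \<Delta> G" using assms by (auto simp: bounded_graph_def)
  have fin: "finite (fst G)" using wf by (simp add: wf_graph_def)
  have finb: "finite (ball G k v)" using fin by (auto simp: ball_def)
  have finN: "finite {u. (w, u) \<in> snd G}" for w
    using wf fin by (auto simp: wf_graph_def intro: finite_subset[of _ "fst G"])
  have sub: "ball G (Suc k) v \<subseteq> ball G k v \<union> (\<Union>w\<in>ball G k v. {u. (w, u) \<in> snd G})"
    using wf by (auto simp: ball_def dest: dist_in)
  have "card (ball G (Suc k) v) \<le> card (ball G k v \<union> (\<Union>w\<in>ball G k v. {u. (w, u) \<in> snd G}))"
    by (rule card_mono[OF _ sub]) (use finb finN in auto)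
  also have "\<dots> \<le> card (ball G k v) + card (\<Union>w\<in>ball G k v. {u. (w, u) \<in> snd G})"
    by (rule card_Un_le)
  also have "card (\<Union>w\<in>ball G k v. {u. (w, u) \<in> snd G}) \<le> (\<Sum>w\<in>ball G k v. card {u. (w, u) \<in> snd G})"
    by (rule card_UN_le[OF finb])
  also have "\<dots> \<le> (\<Sum>w\<in>ball G k v. \<Delta>)"
    using md by (intro sum_mono) (auto simp: max_deg_le_def ball_def)
  also have "\<dots> = card (ball G k v) * \<Delta>" by simp
  finally have "card (ball G (Suc k) v) \<le> card (ball G k v) * (\<Delta> + 1)" by simp
  also have "\<dots> \<le> (\<Delta> + 1) ^ k * (\<Delta> + 1)" using Suc.IH by (rule mult_le_mono1)
  finally show ?case by (simp add: mult.commute)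
qed
lemma main_mend:
  assumes ver: "is_verifier \<Delta> r \<psi>" and men: "verifier_mendable \<Delta> r \<psi> T"
    and n0: "card (ball G (T n0 + 3 * r) v) \<le> n0"
    and bG: "bounded_graph \<Delta> G" and acc: "accepts_relaxed r \<psi> G inp lam" and vG: "v \<in> fst G"
  shows "\<exists>\<mu>. is_mend r \<psi> G inp lam \<mu> v (T n0)"
proof -
  define t where "t = T n0"
  define R where "R = t + 3 * r"
  define B where "B = ball G R v"
  have wf: "wf_graph G" using bG by (simp add: bounded_graph_def)
  have finG: "finite (fst G)" using wf by (simp add: wf_graph_def)
  have finB: "finite B" using finG by (auto simp: B_def ball_def)
  have BG: "B \<subseteq> fst G" by (auto simp: B_def ball_def)
  have cB: "card B \<le> n0" using n0 by (simp add: B_def R_def t_def)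
  have "infinite (UNIV - B :: nat set)" using finB by (simp add: Diff_infinite_finite)
  then obtain P where P: "P \<subseteq> UNIV - B" "finite P" "card P = n0 - card B"
    using infinite_arbitrarily_large by blast
  define H :: graph where "H = (B \<union> P, snd G \<inter> (B \<times> B))"
  have "B \<inter> P = {}" using P(1) by auto
  hence cardH: "card (fst H) = n0"
    using P finB cB by (simp add: H_def card_Un_disjoint)
  have bH: "bounded_graph \<Delta> H"
  proof -
    have "wf_graph H" using wf finB P unfolding H_def wf_graph_def by auto
    moreover have "max_deg_le \<Delta> H"
      unfolding max_deg_le_def
    proof
      fix x assume "x \<in> fst H"
      show "card {u. (x, u) \<in> snd H} \<le> \<Delta>"
      proof (cases "x \<in> fst G")
        case True
        have "card {u. (x, u) \<in> snd H} \<le> card {u. (x, u) \<in> snd G}"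
          by (rule card_mono) (use wf finG in \<open>auto simp: H_def wf_graph_def intro: finite_subset[of _ "fst G"]\<close>)
        also have "\<dots> \<le> \<Delta>" using bG True by (auto simp: bounded_graph_def max_deg_le_def)
        finally show ?thesis .
      next
        case False
        hence "{u. (x, u) \<in> snd H} = {}" using BG by (auto simp: H_def)
        thus ?thesis by simp
      qed
    qed
    ultimately show ?thesis by (simp add: bounded_graph_def)
  qed
  have sndH: "snd H = snd G \<inter> (B \<times> B)" and BH: "B \<subseteq> fst H" and sub: "snd H \<subseteq> snd G"
    by (auto simp: H_def)
  have ballB: "ball G R v \<subseteq> B" by (simp add: B_def)
  have agree: "ball H k w = ball G k w \<and> (\<forall>x\<in>ball G k w. \<forall>y\<in>ball G k w. ((x, y) \<in> snd H \<longleftrightarrow> (x, y) \<in> snd G))"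
    if "dist_le G d v w" "d + k \<le> R" for d k w
  proof -
    have wG: "w \<in> fst G" using dist_in[OF that(1) wf] by simp
    have eq: "dist_le H k w u \<longleftrightarrow> dist_le G k w u" for u
      using dist_sub[OF sub wG] dist_sup[OF wf sndH ballB BH that(1) _ that(2)] by blast
    have bhg: "ball H k w = ball G k w"
    proof -
      have "ball H k w = {u \<in> fst H. dist_le G k w u}" by (simp add: ball_def eq)
      also have "\<dots> = {u. dist_le G k w u}"
        using bH eq dist_in[of H k w] by (auto simp: bounded_graph_def)
      also have "\<dots> = ball G k w" using dist_in[OF _ wf] by (auto simp: ball_def)
      finally show ?thesis .
    qed
    have "x \<in> B" if "x \<in> ball G k w" for x
    proof -
      have "dist_le G (d + k) v x" using dist_trans[OF \<open>dist_le G d v w\<close>] that by (auto simp: ball_def)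
      hence "dist_le G R v x" using dist_mono \<open>d + k \<le> R\<close> by blast
      thus ?thesis using ballB dist_in[OF _ wf] by (auto simp: ball_def)
    qed
    thus ?thesis using bhg sndH by auto
  qed
  define lam' where "lam' u = (if u \<in> ball G (t + 2 * r) v then lam u else None)" for u
  have accH: "accepts_relaxed r \<psi> H inp lam'"
    unfolding accepts_relaxed_def
  proof
    fix w assume wH: "w \<in> fst H"
    show "relaxed r \<psi> H inp lam' w"
    proof (cases "\<exists>u\<in>ball H r w. lam' u = None")
      case True thus ?thesis by (simp add: relaxed_def)
    next
      case False
      have "w \<in> ball H r w" using wH dist_refl by (simp add: ball_def)
      hence "lam' w \<noteq> None" using False by metis
      hence wb: "w \<in> ball G (t + 2 * r) v" by (auto simp: lam'_def split: if_splits)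
      hence dw: "dist_le G (t + 2 * r) v w" and wG: "w \<in> fst G" by (auto simp: ball_def)
      have ag: "ball H r w = ball G r w" "\<forall>x\<in>ball G r w. \<forall>y\<in>ball G r w. ((x, y) \<in> snd G \<longleftrightarrow> (x, y) \<in> snd H)"
        using agree[OF dw, of r] by (auto simp: R_def)
      have "\<forall>u\<in>ball G r w. lam u = lam' u"
        using False ag(1) by (auto simp: lam'_def split: if_splits)
      moreover have "relaxed r \<psi> G inp lam w" using acc wG by (simp add: accepts_relaxed_def)
      moreover have "w \<in> fst H" using wH .
      ultimately show ?thesis
        using relaxed_transfer[OF ver bG bH wG wH ag(1)[symmetric] ag(2)] by blast
    qed
  qed
  have "dist_le G R v v" using dist_refl[OF vG] .
  hence vH: "v \<in> fst H" using BH vG by (auto simp: B_def ball_def)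
  obtain \<mu>' where mu': "is_mend r \<psi> H inp lam' \<mu>' v t"
    using men bH accH vH cardH unfolding verifier_mendable_def t_def by metis
  define \<mu> where "\<mu> u = (if dist_le G t v u then \<mu>' u else lam u)" for u
  have mm: "\<mu> u = \<mu>' u" if "dist_le G (t + 2 * r) v u" for u
  proof (cases "dist_le G t v u")
    case True thus ?thesis by (simp add: \<mu>_def)
  next
    case False
    have "dist_le G R v u" using dist_mono[OF that] by (simp add: R_def)
    hence uB: "u \<in> fst H" using dist_in[OF that wf] ballB BH
      by (auto simp: ball_def)
    have "\<mu>' u = lam' u"
    proof (rule ccontr)
      assume "\<mu>' u \<noteq> lam' u"
      hence "dist_le H t v u" using mu' uB by (auto simp: is_mend_def)
      hence "dist_le G t v u" using dist_sub[OF sub vG] by blast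
      thus False using False by simp
    qed
    moreover have "lam' u = lam u" using that dist_in[OF that wf] by (simp add: lam'_def ball_def)
    ultimately show ?thesis using False by (simp add: \<mu>_def)
  qed
  have "is_mend r \<psi> G inp lam \<mu> v t"
    unfolding is_mend_def
  proof (intro conjI ballI impI)
    show "accepts_relaxed r \<psi> G inp \<mu>"
      unfolding accepts_relaxed_def
    proof
      fix w assume wG: "w \<in> fst G"
      show "relaxed r \<psi> G inp \<mu> w"
      proof (cases "\<forall>u\<in>ball G r w. \<mu> u = lam u")
        case True
        have "relaxed r \<psi> G inp lam w" using acc wG by (simp add: accepts_relaxed_def)
        moreover have "\<forall>u\<in>ball G r w. lam u = \<mu> u" using True by simp
        ultimately show ?thesis using relaxed_transfer[OF ver bG bG wG wG refl] by blast
      next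
        case False
        then obtain u where u: "u \<in> ball G r w" "\<mu> u \<noteq> lam u" by blast
        hence "dist_le G t v u" by (auto simp: \<mu>_def split: if_splits)
        moreover have "dist_le G r u w" using u(1) dist_sym[OF wf] by (auto simp: ball_def)
        ultimately have dw: "dist_le G (t + r) v w" by (rule dist_trans)
        have ag: "ball H r w = ball G r w" "\<forall>x\<in>ball G r w. \<forall>y\<in>ball G r w. ((x, y) \<in> snd H \<longleftrightarrow> (x, y) \<in> snd G)"
          using agree[OF dw, of r] by (auto simp: R_def)
        have "w \<in> ball G r w" using wG dist_refl[OF wG] by (simp add: ball_def)
        hence wH: "w \<in> fst H" using ag(1) by (auto simp: ball_def)
        have "\<forall>x\<in>ball H r w. \<mu>' x = \<mu> x"
        proof
          fix x assume "x \<in> ball H r w"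
          hence "dist_le G r w x" using ag(1) by (auto simp: ball_def)
          hence "dist_le G (t + r + r) v x" by (rule dist_trans[OF dw])
          hence "dist_le G (t + 2 * r) v x" by (simp add: mult_2 add.assoc)
          thus "\<mu>' x = \<mu> x" using mm by simp
        qed
        moreover have "relaxed r \<psi> H inp \<mu>' w" using mu' wH by (simp add: is_mend_def accepts_relaxed_def)
        ultimately show ?thesis
          using relaxed_transfer[OF ver bH bG wH wG ag(1) _ ] ag(2) by (auto simp: ag(1))
      qed
    qed
  next
    have "dist_le G t v v" using dist_refl vG by simp
    thus "\<mu> v \<noteq> None" using mu' by (simp add: \<mu>_def is_mend_def)
  next
    fix u assume uG: "u \<in> fst G" and n: "\<mu> u = None"
    show "lam u = None"
    proof (cases "dist_le G t v u")
      case True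
      hence d2: "dist_le G (t + 2 * r) v u" using dist_mono by simp
      have "dist_le G R v u" using dist_mono[OF d2] by (simp add: R_def)
      hence "u \<in> fst H" using ballB BH uG by (auto simp: ball_def)
      moreover have "\<mu>' u = None" using n True by (simp add: \<mu>_def)
      ultimately have "lam' u = None" using mu' by (simp add: is_mend_def)
      thus ?thesis using d2 uG by (simp add: lam'_def ball_def)
    next
      case False thus ?thesis using n by (simp add: \<mu>_def)
    qed
  next
    fix u assume "u \<in> fst G" "\<mu> u \<noteq> lam u"
    thus "dist_le G t v u" by (auto simp: \<mu>_def split: if_splits)
  qed
  thus ?thesis by (auto simp: t_def)
qed
theorem corollary8p6:
  fixes \<Delta> r :: nat and \<psi> :: "('i, 'o) verifier" and T :: "nat \<Rightarrow> nat"
  assumes "is_LCL \<Delta> r \<psi>"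
    and "(\<lambda>n. real (T n)) \<in> o(\<lambda>n. ln (real n))"
    and "problem_mendable \<Delta> r \<psi> T"
  shows "\<exists>c::nat. problem_mendable \<Delta> r \<psi> (\<lambda>_. c)"
proof -
  obtain \<psi>' where v': "is_verifier \<Delta> r \<psi>'"
    and sol: "\<forall>G inp lab. bounded_graph \<Delta> G \<longrightarrow> (solution \<psi>' G inp lab \<longleftrightarrow> solution \<psi> G inp lab)"
    and men: "verifier_mendable \<Delta> r \<psi>' T"
    using assms(3) unfolding problem_mendable_def by blast
  obtain n0 where n0: "(\<Delta> + 2) ^ T n0 * (\<Delta> + 2) ^ (3 * r) \<le> n0"
    using exists_n0[OF assms(2), of "\<Delta> + 2" "(\<Delta> + 2) ^ (3 * r)"] by auto
  have "verifier_mendable \<Delta> r \<psi>' (\<lambda>_. T n0)"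
    unfolding verifier_mendable_def
  proof (intro allI impI, elim conjE)
    fix G inp lam v
    assume bG: "bounded_graph \<Delta> G" and acc: "accepts_relaxed r \<psi>' G inp lam" and vG: "v \<in> fst G"
    have "card (ball G (T n0 + 3 * r) v) \<le> (\<Delta> + 1) ^ (T n0 + 3 * r)" by (rule ball_card[OF bG])
    also have "\<dots> \<le> (\<Delta> + 2) ^ (T n0 + 3 * r)" by (rule power_mono) auto
    also have "\<dots> \<le> n0" using n0 by (simp add: power_add)
    finally have c: "card (ball G (T n0 + 3 * r) v) \<le> n0" .
    show "\<exists>\<mu>. is_mend r \<psi>' G inp lam \<mu> v (T n0)"
      by (rule main_mend[OF v' men c bG acc vG])
  qed
  thus ?thesis using v' sol unfolding problem_mendable_def by blast
qed

end
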